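(* Fix $k\in[n]$ and vectors $\delta_i\in\mathbb{R}^n$ for $i\neq k$. Let $(W,P)$ be the stable point for the positions $M+\Delta_0$, where $\Delta_0e_i=\delta_i$ for $i\ne k$ and $\Delta_0e_k=0$, and let $(W',P')$ be the stable point for $M+\Delta_1$, where $\Delta_1e_i=\delta_i$ for $i\neq k$ and $\Delta_1e_k=\delta_k\in\mathbb{R}^n$. Let $\Gamma^{-1/2}\Sigma\Gamma^{-1/2}=V\Lambda V^T$ be an eigendecomposition with $V$ orthogonal and $\Lambda=\mathrm{diag}(\lambda_1,\dots,\lambda_n)$, $\lambda_i>0$. Define the symmetric matrix $A\in\mathbb{R}^{n\times n}$ by $$A_{ii}=\frac{V_{ki}^2}{4\lambda_i}+\sum_{\ell=1}^n\frac{V_{k\ell}^2}{2(\lambda_i+\lambda_\ell)},\qquad A_{ij}=\frac{V_{ki}V_{kj}}{2(\lambda_i+\lambda_j)}\ (i\neq j),$$ and $B=\gamma_k^{-1}\Gamma^{-1/2}VAV^T\Gamma^{-1/2}$. Then $W'e_k=We_k+B\delta_k$.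
   Context: Fix agents $[n]=\{1,\dots,n\}$. Let $\Sigma\in\mathbb{R}^{n\times n}$ be symmetric positive definite, $\Gamma=\mathrm{diag}(\gamma_1,\dots,\gamma_n)$ with all $\gamma_i>0$, and let $M\in\mathbb{R}^{n\times n}$ be the matrix of true beliefs. For a matrix of reported negotiating positions $M'\in\mathbb{R}^{n\times n}$, the stable point for $M'$ is the unique pair $(W,P)$ of real $n\times n$ matrices with $W=W^T$, $P^T=-P$ and $M'-P=2\Sigma W\Gamma$; equivalently $\mathrm{vec}(W)=\tfrac12(\Gamma\otimes\Sigma+\Sigma\otimes\Gamma)^{-1}\mathrm{vec}(M'+M'^T)$ and $P=M'-2\Sigma W\Gamma$. Here $\mathrm{vec}$ stacks columns and $e_i$ is the $i$-th standard basis vector. *)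

theory Defs
  imports "HOL-Analysis.Analysis"
begin

definition diagm :: "real ^ 'n \<Rightarrow> real ^ 'n ^ 'n" where
  "diagm v = (\<chi> i j. if i = j then v $ i else 0)"

definition is_stable_point ::
  "real ^ 'n ^ 'n \<Rightarrow> real ^ 'n \<Rightarrow> real ^ 'n ^ 'n \<Rightarrow> real ^ 'n ^ 'n \<Rightarrow> real ^ 'n ^ 'n \<Rightarrow> bool" where
  "is_stable_point Sig gamma M' W P \<longleftrightarrow>
     transpose W = W \<and> transpose P = - P \<and> M' - P = 2 *\<^sub>R (Sig ** W ** diagm gamma)"

definition Amat :: "real ^ 'n ^ 'n \<Rightarrow> real ^ 'n \<Rightarrow> 'n \<Rightarrow> real ^ 'n ^ 'n" where
  "Amat V lam k = (\<chi> i j. if i = j then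
        (V $ k $ i)^2 / (4 * lam $ i) + (\<Sum>l\<in>UNIV. (V $ k $ l)^2 / (2 * (lam $ i + lam $ l)))
      else (V $ k $ i) * (V $ k $ j) / (2 * (lam $ i + lam $ j)))"

end

theory Submission
  imports Defs
begin


lemma mm_add_l: "(A::real^'n^'m) ** (B + C) = A ** B + A ** C"
  by (rule matrix_add_ldistrib)
lemma mm_add_r: "((A::real^'n^'m) + B) ** C = A ** C + B ** C"
  by (simp add: matrix_matrix_mult_def vec_eq_iff sum.distrib algebra_simps)
lemma mm_diff_l: "(A::real^'n^'m) ** (B - C) = A ** B - A ** C"
  by (simp add: matrix_matrix_mult_def vec_eq_iff sum_subtractf algebra_simps)
lemma mm_diff_r: "((A::real^'n^'m) - B) ** C = A ** C - B ** C"
  by (simp add: matrix_matrix_mult_def vec_eq_iff sum_subtractf algebra_simps)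
lemma mm_scale_l: "(c *\<^sub>R (A::real^'n^'m)) ** B = c *\<^sub>R (A ** B)"
  by (simp add: matrix_matrix_mult_def vec_eq_iff sum_distrib_left algebra_simps)
lemma mm_scale_r: "(A::real^'n^'m) ** (c *\<^sub>R B) = c *\<^sub>R (A ** B)"
  by (simp add: matrix_matrix_mult_def vec_eq_iff sum_distrib_left algebra_simps)
lemma tr_add: "transpose ((A::real^'n^'m) + B) = transpose A + transpose B"
  by (simp add: transpose_def vec_eq_iff)
lemma tr_diff: "transpose ((A::real^'n^'m) - B) = transpose A - transpose B"
  by (simp add: transpose_def vec_eq_iff)
lemma tr_scale: "transpose (c *\<^sub>R (A::real^'n^'m)) = c *\<^sub>R transpose A"
  by (simp add: transpose_def vec_eq_iff)
lemma tr_uminus: "transpose (- (A::real^'n^'m)) = - transpose A"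
  by (simp add: transpose_def vec_eq_iff)

lemma ifm1: "(if P then a else (0::real)) * b = (if P then a*b else 0)" by simp
lemma ifm2: "b * (if P then a else (0::real)) = (if P then b*a else 0)" by simp
lemma diagm_left: "(diagm x ** A) $ i $ j = x $ i * (A::real^'m^'n) $ i $ j"
  unfolding diagm_def matrix_matrix_mult_def
  by (simp add: ifm1)
lemma diagm_right: "(A ** diagm x) $ i $ j = (A::real^'n^'m) $ i $ j * x $ j"
  unfolding diagm_def matrix_matrix_mult_def
  by (simp add: ifm2)
lemma diagm_mult: "diagm x ** diagm y = diagm (\<chi> i. x $ i * y $ i)"
  by (simp add: vec_eq_iff diagm_left) (simp add: diagm_def)
lemma tr_diagm: "transpose (diagm x) = diagm x"
  by (simp add: transpose_def diagm_def vec_eq_iff)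
lemma diagm_one: "(\<And>i. x $ i = 1) \<Longrightarrow> diagm x = mat 1"
  by (simp add: diagm_def mat_def vec_eq_iff)

lemma sum_if_c: "(\<Sum>r\<in>A. if P then g r else (0::real)) = (if P then (\<Sum>r\<in>A. g r) else 0)"
  by simp
lemma outer1: "(transpose V ** (\<chi> r c. if c = k then w$r else 0) ** (V::real^'n^'n)) $ a $ b
   = (transpose V *v w)$a * V$k$b"
  unfolding matrix_matrix_mult_def transpose_def matrix_vector_mult_def
  by (simp add: ifm1 ifm2 sum_distrib_right sum_if_c)
lemma outer2: "(transpose V ** (\<chi> r c. if r = k then w$c else 0) ** (V::real^'n^'n)) $ a $ b
   = V$k$a * (transpose V *v w)$b"
  unfolding matrix_matrix_mult_def transpose_def matrix_vector_mult_def
  by (simp add: ifm1 ifm2 sum_distrib_left mult.assoc) (rule sum.cong; simp add: mult_ac)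
lemma diagm_vec: "(diagm x *v y) $ i = x $ i * y $ i"
  unfolding matrix_vector_mult_def diagm_def by (simp add: ifm1)
lemma Amat_split: "Amat V lam k $ a $ b = V$k$a * V$k$b / (2*(lam$a + lam$b))
   + (if a = b then (\<Sum>l\<in>UNIV. (V $ k $ l)^2 / (2 * (lam $ a + lam $ l))) else 0)"
  unfolding Amat_def by (simp add: power2_eq_square)

theorem mainTheorem2:
  fixes Sig M :: "real ^ 'n ^ 'n"
    and gamma :: "real ^ 'n"
    and k :: 'n
    and delta :: "'n \<Rightarrow> real ^ 'n"
    and W P W' P' V :: "real ^ 'n ^ 'n"
    and lam :: "real ^ 'n"
  assumes Sigma_sym: "transpose Sig = Sig"
    and Sigma_pd: "\<And>x. x \<noteq> 0 \<Longrightarrow> x \<bullet> (Sig *v x) > 0"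
    and gamma_pos: "\<And>i. gamma $ i > 0"
    and stab0: "is_stable_point Sig gamma
                  (M + (\<chi> r c. if c = k then 0 else delta c $ r)) W P"
    and stab1: "is_stable_point Sig gamma
                  (M + (\<chi> r c. delta c $ r)) W' P'"
    and V_orth: "orthogonal_matrix V"
    and lam_pos: "\<And>i. lam $ i > 0"
    and eig: "diagm (\<chi> i. 1 / sqrt (gamma $ i)) ** Sig ** diagm (\<chi> i. 1 / sqrt (gamma $ i))
              = V ** diagm lam ** transpose V"
  shows "column k W' = column k W +
           ((1 / gamma $ k) *\<^sub>R (diagm (\<chi> i. 1 / sqrt (gamma $ i)) ** V ** Amat V lam k
              ** transpose V ** diagm (\<chi> i. 1 / sqrt (gamma $ i)))) *v delta k"
proof -
  define h where "h = (\<chi> i. 1 / sqrt (gamma $ i))"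
  define rr where "rr = (\<chi> i. sqrt (gamma $ i))"
  define H where "H = diagm h"
  define R where "R = diagm rr"
  define G where "G = diagm gamma"
  define L where "L = diagm lam"
  define tV where "tV = transpose V"
  have HR: "H ** R = mat 1" "R ** H = mat 1"
    unfolding H_def R_def diagm_mult h_def rr_def
    using gamma_pos apply (auto intro!: diagm_one simp: less_imp_le)
    using gamma_pos by (metis less_irrefl)+
  have GH: "G ** H = R" "H ** G = R"
    unfolding H_def R_def G_def diagm_mult h_def rr_def
    using gamma_pos by (auto simp: vec_eq_iff diagm_def less_imp_le real_div_sqrt)
  have tH: "transpose H = H" and tG: "transpose G = G"
    unfolding H_def G_def by (simp_all add: tr_diagm)
  have VV: "tV ** V = mat 1" "V ** tV = mat 1"
    using V_orth unfolding orthogonal_matrix_def tV_def by auto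
  have r1: "\<And>Y::real^'n^'n. Y ** H ** R = Y" "\<And>Y::real^'n^'n. Y ** R ** H = Y"
    "\<And>Y::real^'n^'n. Y ** tV ** V = Y" "\<And>Y::real^'n^'n. Y ** V ** tV = Y"
    "\<And>Y::real^'n^'n. Y ** G ** H = Y ** R" "\<And>Y::real^'n^'n. Y ** H ** G = Y ** R"
    by (simp_all add: matrix_mul_assoc[symmetric] HR VV GH)
  have SigE: "Sig = R ** V ** L ** tV ** R"
  proof -
    have "Sig = (R ** H) ** Sig ** (H ** R)" by (simp add: HR)
    also have "\<dots> = R ** (H ** Sig ** H) ** R" by (simp add: matrix_mul_assoc)
    also have "H ** Sig ** H = V ** L ** tV" using eig unfolding H_def h_def L_def tV_def .
    finally show ?thesis by (simp add: matrix_mul_assoc)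
  qed
  define X where "X = W' - W"
  define Q where "Q = P' - P"
  define D :: "real^'n^'n" where "D = (\<chi> r c. if c = k then delta k $ r else 0)"
  from stab0 have tW: "transpose W = W" and tP: "transpose P = - P"
    and e0: "M + (\<chi> r c. if c = k then 0 else delta c $ r) - P = 2 *\<^sub>R (Sig ** W ** G)"
    unfolding is_stable_point_def G_def by auto
  from stab1 have tW': "transpose W' = W'" and tP': "transpose P' = - P'"
    and e1: "M + (\<chi> r c. delta c $ r) - P' = 2 *\<^sub>R (Sig ** W' ** G)"
    unfolding is_stable_point_def G_def by auto
  have XT: "transpose X = X" unfolding X_def by (simp add: tr_diff tW tW')
  have QT: "transpose Q = - Q" unfolding Q_def by (simp add: tr_diff tP tP')
  have Ddiff: "(M + (\<chi> r c. delta c $ r) - P') - (M + (\<chi> r c. if c = k then 0 else delta c $ r) - P) = D - Q"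
    unfolding D_def Q_def by (simp add: vec_eq_iff)
  have eq1: "D - Q = 2 *\<^sub>R (Sig ** X ** G)"
    unfolding Ddiff[symmetric] e0 e1 X_def by (simp add: mm_diff_l mm_diff_r scaleR_diff_right)
  have eq1t: "transpose D + Q = 2 *\<^sub>R (G ** X ** Sig)"
  proof -
    have "transpose (D - Q) = transpose D + Q" by (simp add: tr_diff QT)
    moreover have "transpose (2 *\<^sub>R (Sig ** X ** G)) = 2 *\<^sub>R (G ** X ** Sig)"
      by (simp add: tr_scale matrix_transpose_mul tG XT Sigma_sym matrix_mul_assoc)
    ultimately show ?thesis using eq1 by metis
  qed
  have eq2: "D + transpose D = 2 *\<^sub>R (Sig ** X ** G) + 2 *\<^sub>R (G ** X ** Sig)"
    using eq1 eq1t by (metis add.assoc add_diff_cancel_left' diff_add_cancel add.commute)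
  define Z where "Z = tV ** R ** X ** R ** V"
  have T1: "tV ** H ** (Sig ** X ** G) ** H ** V = L ** Z"
    unfolding SigE Z_def by (simp add: matrix_mul_assoc r1 VV)
  have T2: "tV ** H ** (G ** X ** Sig) ** H ** V = Z ** L"
    unfolding SigE Z_def by (simp add: matrix_mul_assoc r1 VV)
  define E where "E = tV ** H ** (D + transpose D) ** H ** V"
  have eq3: "E = 2 *\<^sub>R (L ** Z + Z ** L)"
    unfolding E_def eq2 mm_add_l mm_add_r mm_scale_l mm_scale_r
    by (simp add: matrix_mul_assoc[symmetric] mm_add_l mm_add_r mm_scale_l mm_scale_r)
       (simp add: matrix_mul_assoc T1[simplified matrix_mul_assoc] T2[simplified matrix_mul_assoc] scaleR_add_right)
  have Zab: "Z$a$b = E$a$b / (2*(lam$a + lam$b))" for a b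
  proof -
    have "E$a$b = 2*(lam$a * Z$a$b + Z$a$b * lam$b)" using eq3 by (simp add: L_def diagm_left diagm_right)
    moreover have "lam$a + lam$b > 0" using lam_pos add_pos_pos by blast
    ultimately show ?thesis by (simp add: field_simps)
  qed
  have XZ: "X = H ** V ** Z ** tV ** H" unfolding Z_def by (simp add: matrix_mul_assoc r1 VV HR)
  define w where "w = (\<chi> r. h$r * delta k $ r * h$k)"
  have HDH: "H ** D ** H = (\<chi> r c. if c = k then w$r else 0)"
    by (simp add: vec_eq_iff H_def diagm_left diagm_right D_def w_def)
  have HtDH: "H ** transpose D ** H = (\<chi> r c. if r = k then w$c else 0)"
    by (simp add: vec_eq_iff H_def diagm_left diagm_right D_def w_def transpose_def mult_ac)
  have E2: "E = tV ** (H ** D ** H) ** V + tV ** (H ** transpose D ** H) ** V"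
    unfolding E_def by (simp add: mm_add_l mm_add_r matrix_mul_assoc)
  define u where "u = tV *v (H *v delta k)"
  have tVw: "tV *v w = h$k *\<^sub>R u"
  proof -
    have Hd: "H *v delta k = (\<chi> r. h$r * delta k $ r)" by (simp add: vec_eq_iff H_def diagm_vec)
    show ?thesis unfolding u_def w_def Hd by (simp add: vec_eq_iff matrix_vector_mult_def sum_distrib_left mult_ac)
  qed
  have Eab: "E$a$b = h$k * (u$a * V$k$b + V$k$a * u$b)" for a b
    unfolding E2 HDH HtDH using outer1[of V k w a b] outer2[of V k w a b]
    by (simp add: tV_def[symmetric] tVw algebra_simps)
  have hk2: "h$k * h$k = 1 / gamma$k"
    unfolding h_def using gamma_pos[of k] by (simp add: less_imp_le)
  define vk where "vk = (\<chi> b. V$k$b)"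
  have colX: "column k W' = column k W + column k X" by (simp add: X_def vec_eq_iff column_def)
  have cX: "column k X = H *v (V *v (Z *v (tV *v (H *v axis k 1))))"
    by (simp add: matrix_vector_mult_basis[symmetric] XZ matrix_vector_mul_assoc matrix_mul_assoc)
  have ek: "tV *v (H *v axis k 1) = h$k *\<^sub>R vk"
    by (simp add: vec_eq_iff matrix_vector_mult_def H_def diagm_def axis_def tV_def transpose_def vk_def ifm2 mult_ac)
  have key: "Z *v (h$k *\<^sub>R vk) = (1 / gamma$k) *\<^sub>R (Amat V lam k *v u)"
  proof (rule iffD2[OF vec_eq_iff], rule allI)
    fix a
    let ?v = "\<lambda>b. V$k$b"
    let ?d = "\<lambda>b. 2*(lam$a + lam$b)"
    have "(Z *v (h$k *\<^sub>R vk)) $ a = (\<Sum>b\<in>UNIV. (h$k * (u$a * ?v b + ?v a * u$b)) / ?d b * (h$k * ?v b))"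
      by (simp add: matrix_vector_mult_def Zab Eab vk_def)
    also have "\<dots> = (1/gamma$k) * (\<Sum>b\<in>UNIV. u$a * (?v b)^2 / ?d b + ?v a * ?v b / ?d b * u$b)"
      unfolding sum_distrib_left hk2[symmetric]
      by (rule sum.cong) (simp_all add: field_simps power2_eq_square add_divide_distrib)
    also have "\<dots> = (1/gamma$k) * (\<Sum>b\<in>UNIV. Amat V lam k $ a $ b * u$b)"
    proof -
      have "(\<Sum>b\<in>UNIV. Amat V lam k $ a $ b * u$b) = (\<Sum>b\<in>UNIV. ?v a * ?v b / ?d b * u$b
          + (if a = b then (\<Sum>l\<in>UNIV. (?v l)^2 / ?d l) * u$b else 0))"
        by (rule sum.cong) (simp_all add: Amat_split algebra_simps)
      also have "\<dots> = (\<Sum>b\<in>UNIV. ?v a * ?v b / ?d b * u$b) + (\<Sum>l\<in>UNIV. (?v l)^2 / ?d l) * u$a"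
        by (simp add: sum.distrib)
      also have "\<dots> = (\<Sum>b\<in>UNIV. u$a * (?v b)^2 / ?d b + ?v a * ?v b / ?d b * u$b)"
        by (simp add: sum.distrib sum_distrib_left mult_ac times_divide_eq_right)
      finally show ?thesis by simp
    qed
    also have "\<dots> = ((1 / gamma$k) *\<^sub>R (Amat V lam k *v u)) $ a"
      by (simp add: matrix_vector_mult_def)
    finally show "(Z *v (h$k *\<^sub>R vk)) $ a = ((1 / gamma$k) *\<^sub>R (Amat V lam k *v u)) $ a" .
  qed
  have rhs: "((1 / gamma $ k) *\<^sub>R (H ** V ** Amat V lam k ** tV ** H)) *v delta k
      = H *v (V *v ((1 / gamma$k) *\<^sub>R (Amat V lam k *v u)))"
    by (simp add: scaleR_matrix_vector_assoc[symmetric] matrix_vector_mul_assoc u_def matrix_vector_mult_scaleR matrix_mul_assoc)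
  show ?thesis
    unfolding colX cX ek key rhs[unfolded H_def h_def tV_def] by (simp add: H_def h_def)
qed

end
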